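(* If $p>1$, then \begin{equation*} \langle\!\langle f_{1/(p-1)}\rangle\!\rangle_{\mathbb R}= \langle\!\langle f_{-1/p}\rangle\!\rangle_{\mathbb R}\equiv \varepsilon_{\mathbb R}(p)= \varepsilon_{\mathbb R_+}(p)\cdot \max_{0\le\eta\le1}\psi\left(\frac1{p-1},\eta\right), \end{equation*} where $\varepsilon_{\mathbb R_+}(p)=\langle\!\langle f_{1/(p-1)}\rangle\!\rangle_{\mathbb R_+}=\langle\!\langle f_{-1/p}\rangle\!\rangle_{\mathbb R_+}=2\frac{(p-1)^{p-1}}{p^p}$.
   Context: Let $R$ be $\mathbb R$ or $\mathbb R_+=[0,\infty)$. For a non-negative function $f$ locally summable on $R$ and a bounded interval $I\subset R$, set $f_I=\frac1{|I|}\int_I f(x)\,dx$ and $\Omega(f;I)=\frac1{|I|}\int_I|f(x)-f_I|\,dx$. The relative oscillation is $\langle f\rangle_I=\Omega(f;I)/f_I$, and the Gurov--Reshetnyak "norm" of $f$ on $R$ is $\langle\!\langle f\rangle\!\rangle_R=\sup_{I\subset R}\langle f\rangle_I$, the supremum over bounded subintervals $I$ of $R$. Let $f_\alpha(x)=|x|^\alpha$ ($x\in\mathbb R$, $\alpha>-1$). For $\alpha>-1$, $\alpha\neq0$ and $0\le\eta\le1$, define \begin{equation*} \psi(\alpha,\eta)=\left\{\begin{array}{ll} \displaystyle\frac{\left(1+\eta^{\alpha+1}\right)^{1/\alpha}}{(1+\eta)^{(\alpha+1)/\alpha}}+ \frac{(\alpha+1)^{(\alpha+1)/\alpha}}\alpha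 \left[\frac1{1+\eta^{\alpha+1}}-\frac1{1+\eta}\right],& \text{ if }\; 0\le\eta\le\eta_1,\\[10pt] \displaystyle 2\frac{\left(1+\eta^{\alpha+1}\right)^{1/\alpha}}{(1+\eta)^{(\alpha+1)/\alpha}},& \text{ if }\; \eta_1\le\eta\le1, \end{array}\right. \end{equation*} where $\eta_1=\eta_1(\alpha)\in(0,1)$ is the root of $\eta^\alpha=1/(1+\alpha(\eta+1))$. *)

theory Defs
  imports "HOL-Analysis.Analysis"
begin

definition mean_on :: "(real \<Rightarrow> real) \<Rightarrow> real \<Rightarrow> real \<Rightarrow> real" where
  "mean_on f a b = (LINT x:{a..b}|lborel. f x) / (b - a)"

definition osc_on :: "(real \<Rightarrow> real) \<Rightarrow> real \<Rightarrow> real \<Rightarrow> real" where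
  "osc_on f a b = (LINT x:{a..b}|lborel. \<bar>f x - mean_on f a b\<bar>) / (b - a)"

definition rel_osc :: "(real \<Rightarrow> real) \<Rightarrow> real \<Rightarrow> real \<Rightarrow> real" where
  "rel_osc f a b = osc_on f a b / mean_on f a b"

definition GR_norm :: "(real \<Rightarrow> real) \<Rightarrow> real set \<Rightarrow> real" where
  "GR_norm f R = Sup {rel_osc f a b | a b. a < b \<and> {a..b} \<subseteq> R}"

definition f_pow :: "real \<Rightarrow> real \<Rightarrow> real" where
  "f_pow \<alpha> x = \<bar>x\<bar> powr \<alpha>"

definition eta1 :: "real \<Rightarrow> real" where
  "eta1 \<alpha> = (THE \<eta>. 0 < \<eta> \<and> \<eta> < 1 \<and> \<eta> powr \<alpha> = 1 / (1 + \<alpha> * (\<eta> + 1)))"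

definition psi :: "real \<Rightarrow> real \<Rightarrow> real" where
  "psi \<alpha> \<eta> =
    (if \<eta> \<le> eta1 \<alpha> then
       (1 + \<eta> powr (\<alpha> + 1)) powr (1 / \<alpha>) / (1 + \<eta>) powr ((\<alpha> + 1) / \<alpha>)
       + (\<alpha> + 1) powr ((\<alpha> + 1) / \<alpha>) / \<alpha>
         * (1 / (1 + \<eta> powr (\<alpha> + 1)) - 1 / (1 + \<eta>))
     else
       2 * (1 + \<eta> powr (\<alpha> + 1)) powr (1 / \<alpha>) / (1 + \<eta>) powr ((\<alpha> + 1) / \<alpha>))"

end

theory Submission
  imports Defs
begin


definition GG :: "real \<Rightarrow> real \<Rightarrow> real" where
  "GG g x = (if 0 \<le> x then x powr (g+1) else - ((-x) powr (g+1))) / (g+1)"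

lemma GG_deriv:
  assumes g: "g > -1" and x: "x \<noteq> 0"
  shows "(GG g has_real_derivative f_pow g x) (at x)"
proof (cases "x > 0")
  case True
  have d: "((\<lambda>y. y powr (g+1) / (g+1)) has_real_derivative ((g+1) * x powr (g+1-1)) / (g+1)) (at x)"
    by (rule DERIV_cdivide[OF has_real_derivative_powr[OF True]])
  have gn: "g + 1 \<noteq> 0" using g by simp
  have e: "((g+1) * x powr (g+1-1)) / (g+1) = f_pow g x"
    using gn True by (simp add: f_pow_def)
  show ?thesis
    apply (rule has_field_derivative_transform_within_open[OF d[unfolded e], of "{0<..}"])
    using True by (auto simp: GG_def)
next
  case False
  then have xn: "x < 0" using x by simp
  have d0: "((\<lambda>y. y powr (g+1)) has_real_derivative ((g+1) * (-x) powr (g+1-1))) (at (-x))"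
    by (rule has_real_derivative_powr) (use xn in simp)
  have d1: "((\<lambda>y. (-y) powr (g+1)) has_real_derivative ((g+1) * (-x) powr (g+1-1)) * (-1)) (at x)"
    using DERIV_chain2[where g=uminus and x=x, OF d0 DERIV_minus[OF DERIV_ident]] by (simp only: mult_ac)
  have d: "((\<lambda>y. - ((-y) powr (g+1)) / (g+1)) has_real_derivative - (((g+1) * (-x) powr (g+1-1)) * (-1)) / (g+1)) (at x)"
    using DERIV_cdivide[OF DERIV_minus[OF d1], of "g+1"] by simp
  have e: "- (((g+1) * (-x) powr (g+1-1)) * (-1)) / (g+1) = f_pow g x"
    using g xn by (simp add: f_pow_def)
  show ?thesis
    apply (rule has_field_derivative_transform_within_open[OF d[unfolded e], of "{..<0}"])
    using xn by (auto simp: GG_def)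
qed

lemma GG_cont:
  assumes g: "g > -1"
  shows "continuous_on S (GG g)"
proof -
  have "continuous_on UNIV (\<lambda>x. if x \<le> 0 then - ((-x) powr (g+1)) / (g+1) else x powr (g+1) / (g+1))"
  proof (rule continuous_on_cases_le[where h="\<lambda>x. x"])
    have c1: "continuous_on {x \<in> UNIV. x \<le> 0} (\<lambda>x. (-x) powr (g+1))"
      by (rule continuous_on_powr'[OF continuous_on_minus[OF continuous_on_id] continuous_on_const]) (use g in auto)
    show "continuous_on {x \<in> UNIV. x \<le> 0} (\<lambda>x. - ((-x) powr (g+1)) / (g+1))"
      using continuous_on_divide[OF continuous_on_minus[OF c1] continuous_on_const, of "g+1"] g by simp
    have c2: "continuous_on {x \<in> UNIV. 0 \<le> x} (\<lambda>x. x powr (g+1))"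
      by (rule continuous_on_powr'[OF continuous_on_id continuous_on_const]) (use g in auto)
    show "continuous_on {x \<in> UNIV. 0 \<le> x} (\<lambda>x. x powr (g+1) / (g+1))"
      using continuous_on_divide[OF c2 continuous_on_const, of "g+1"] g by simp
    show "continuous_on UNIV (\<lambda>x. x)" by (rule continuous_on_id)
  qed simp
  moreover have "(\<lambda>x. if x \<le> 0 then - ((-x) powr (g+1)) / (g+1) else x powr (g+1) / (g+1)) = GG g"
    by (rule ext) (auto simp: GG_def)
  ultimately show ?thesis by (metis continuous_on_subset subset_UNIV)
qed

lemma f_pow_has_integral:
  assumes g: "g > -1" and uv: "u \<le> v"
  shows "(f_pow g has_integral (GG g v - GG g u)) {u..v}"
  apply (rule fundamental_theorem_of_calculus_interior_strong[where S="{0}"])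
  using uv GG_deriv[OF g] GG_cont[OF g]
  by (auto simp: has_real_derivative_iff_has_vector_derivative[symmetric])

lemma f_pow_nonneg: "0 \<le> f_pow g x" by (simp add: f_pow_def)

lemma f_pow_set_integrable:
  assumes g: "g > -1"
  shows "set_integrable lborel {u..v} (f_pow g)"
proof (cases "u \<le> v")
  case True
  have "f_pow g absolutely_integrable_on {u..v}"
    apply (rule nonnegative_absolutely_integrable_1)
    using f_pow_has_integral[OF g True] f_pow_nonneg by auto
  then have "integrable lebesgue (\<lambda>x. indicator {u..v} x *\<^sub>R f_pow g x)"
    by (simp add: set_integrable_def)
  then show ?thesis unfolding set_integrable_def
    by (subst (asm) integrable_completion) (auto simp: f_pow_def)
next
  case False
  then show ?thesis by (simp add: set_integrable_def)
qed


definition cl :: "real \<Rightarrow> real \<Rightarrow> real" where "cl s x = max (-s) (min s x)"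

lemma fm_has_integral:
  assumes g: "g > -1" and uv: "u \<le> v"
  shows "((\<lambda>x. f_pow g x - m) has_integral ((GG g v - GG g u) - m*(v-u))) {u..v}"
proof -
  have "((\<lambda>x. m) has_integral (m*(v-u))) {u..v}"
    using has_integral_const_real[of m u v] uv by (simp add: mult.commute)
  from has_integral_diff[OF f_pow_has_integral[OF g uv] this] show ?thesis .
qed

lemma cut_has_integral:
  assumes g: "g > -1" and s: "s \<ge> 0" and ab: "a \<le> b"
  shows "((\<lambda>x. if x \<in> {-s..s} then f_pow g x - m else 0) has_integral
           ((GG g (cl s b) - GG g (cl s a)) - m*(cl s b - cl s a))) {a..b}"
proof (cases "a \<le> s \<and> -s \<le> b")
  case True
  have e1: "{-s..s} \<inter> {a..b} = {cl s a..cl s b}"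
    using True s by (auto simp: cl_def)
  have "cl s a \<le> cl s b" using ab by (auto simp: cl_def)
  from fm_has_integral[OF g this, of m] show ?thesis
    by (subst has_integral_restrict_Int) (simp only: e1)
next
  case False
  then have e1: "{-s..s} \<inter> {a..b} = {}" by auto
  have e2: "cl s a = cl s b" using False ab by (auto simp: cl_def)
  show ?thesis
    by (subst has_integral_restrict_Int) (simp only: e1 e2 diff_self mult_zero_right diff_zero has_integral_empty)
qed

lemma GG_strict_mono:
  assumes g: "g > -1" and xy: "x < y"
  shows "GG g x < GG g y"
proof -
  have q: "g + 1 > 0" using g by simp
  have "(if 0 \<le> x then x powr (g+1) else - ((-x) powr (g+1))) < (if 0 \<le> y then y powr (g+1) else - ((-y) powr (g+1)))"
  proof (cases "0 \<le> x")
    case True then show ?thesis using xy q by (simp add: powr_less_mono2)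
  next
    case False
    show ?thesis
    proof (cases "0 \<le> y")
      case True
      have "0 < (-x) powr (g+1)" using False by simp
      moreover have "0 \<le> y powr (g+1)" by simp
      ultimately show ?thesis using True False by (simp only: if_P[OF True] if_not_P[OF False] if_True if_False)
    next
      case False2: False
      have "(-y) powr (g+1) < (-x) powr (g+1)" using xy q False2 by (simp add: powr_less_mono2)
      then show ?thesis using False False2 by simp
    qed
  qed
  then show ?thesis unfolding GG_def using q by (simp add: divide_strict_right_mono)
qed


definition sg :: "real \<Rightarrow> real" where "sg g = (if g > 0 then 1 else -1)"

definition JJ :: "real \<Rightarrow> real \<Rightarrow> real \<Rightarrow> real \<Rightarrow> real \<Rightarrow> real" where
  "JJ g m a b s = (GG g (cl s b) - GG g (cl s a)) - m*(cl s b - cl s a)"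

definition Dd :: "real \<Rightarrow> real \<Rightarrow> real \<Rightarrow> real \<Rightarrow> real" where
  "Dd g a b s = sg g * ((cl s b - cl s a)/(b-a) - (GG g (cl s b) - GG g (cl s a))/(GG g b - GG g a))"

lemma pw:
  assumes g: "g \<noteq> 0" and m: "m > 0" and x: "x \<noteq> 0"
  shows "\<bar>x\<bar> \<le> m powr (1/g) \<Longrightarrow> sg g * (f_pow g x - m) \<le> 0"
    and "m powr (1/g) \<le> \<bar>x\<bar> \<Longrightarrow> sg g * (f_pow g x - m) \<ge> 0"
proof -
  let ?t = "m powr (1/g)"
  have tg: "?t powr g = m" using g m by (simp add: powr_powr)
  have ax: "\<bar>x\<bar> > 0" using x by simp
  have tp: "?t > 0" using m by simp
  show "\<bar>x\<bar> \<le> ?t \<Longrightarrow> sg g * (f_pow g x - m) \<le> 0"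
  proof (cases "g > 0")
    case True
    assume h: "\<bar>x\<bar> \<le> ?t"
    have "\<bar>x\<bar> powr g \<le> ?t powr g" using powr_mono2[of g "\<bar>x\<bar>" ?t] True h by simp
    then show ?thesis using True tg by (simp add: sg_def f_pow_def)
  next
    case False
    assume h: "\<bar>x\<bar> \<le> ?t"
    have "?t powr g \<le> \<bar>x\<bar> powr g" using powr_mono2'[of g "\<bar>x\<bar>" ?t] False h ax by simp
    then show ?thesis using False tg by (simp add: sg_def f_pow_def)
  qed
  show "?t \<le> \<bar>x\<bar> \<Longrightarrow> sg g * (f_pow g x - m) \<ge> 0"
  proof (cases "g > 0")
    case True
    assume h: "?t \<le> \<bar>x\<bar>"
    have "?t powr g \<le> \<bar>x\<bar> powr g" using powr_mono2[of g ?t "\<bar>x\<bar>"] True h tp by simp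
    then show ?thesis using True tg by (simp add: sg_def f_pow_def)
  next
    case False
    assume h: "?t \<le> \<bar>x\<bar>"
    have "\<bar>x\<bar> powr g \<le> ?t powr g" using powr_mono2'[of g ?t "\<bar>x\<bar>"] False h tp by simp
    then show ?thesis using False tg by (simp add: sg_def f_pow_def)
  qed
qed

lemma key:
  assumes g: "g > -1" "g \<noteq> 0" and ab: "a < b"
  defines "m \<equiv> mean_on (f_pow g) a b"
  defines "t \<equiv> m powr (1/g)"
  shows "m = (GG g b - GG g a)/(b-a)" "m > 0"
    "rel_osc (f_pow g) a b = 2 * Dd g a b t"
    "\<And>s. s \<ge> 0 \<Longrightarrow> Dd g a b s \<le> Dd g a b t"
proof -
  define M where "M = GG g b - GG g a"
  have Mp: "M > 0" using GG_strict_mono[OF g(1) ab] by (simp add: M_def)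
  have Lp: "b - a > 0" using ab by simp
  have hf: "(f_pow g has_integral M) {a..b}" using f_pow_has_integral[OF g(1)] ab by (simp add: M_def)
  have "(LINT x:{a..b}|lborel. f_pow g x) = integral {a..b} (f_pow g)"
    by (rule set_borel_integral_eq_integral(2)[OF f_pow_set_integrable[OF g(1)]])
  also have "\<dots> = M" using hf by (rule integral_unique)
  finally have mM: "m = M/(b-a)" unfolding m_def mean_on_def by simp
  then show "m = (GG g b - GG g a)/(b-a)" by (simp add: M_def)
  show mp: "m > 0" using mM Mp Lp by simp
  have tp: "t > 0" using mp by (simp add: t_def)
  have Dd_J: "Dd g a b s = - sg g * JJ g m a b s / M" for s
    unfolding Dd_def JJ_def mM M_def[symmetric] using Mp Lp by (simp add: field_simps)
  have cut: "((\<lambda>x. if x \<in> {-s..s} then f_pow g x - m else 0) has_integral JJ g m a b s) {a..b}" if "s \<ge> 0" for s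
    using cut_has_integral[OF g(1) that, of a b m] ab by (simp add: JJ_def)
  show "Dd g a b s \<le> Dd g a b t" if s: "s \<ge> 0" for s
  proof -
    have "sg g * JJ g m a b t \<le> sg g * JJ g m a b s"
    proof (rule has_integral_le[OF has_integral_mult_right[OF cut[OF less_imp_le[OF tp]]] has_integral_mult_right[OF cut[OF s]]])
      fix x assume "x \<in> {a..b}"
      show "sg g * (if x \<in> {-t..t} then f_pow g x - m else 0) \<le> sg g * (if x \<in> {-s..s} then f_pow g x - m else 0)"
      proof (cases "x = 0")
        case True then show ?thesis using s tp by simp
      next
        case False
        note P = pw[OF g(2) mp False, folded t_def]
        show ?thesis
        proof (cases "\<bar>x\<bar> \<le> t")
          case True
          then show ?thesis using P(1)[OF True] by (cases "\<bar>x\<bar> \<le> s") (auto simp: abs_le_iff)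
        next
          case False
          then have "t \<le> \<bar>x\<bar>" by simp
          then show ?thesis using P(2) False by (cases "\<bar>x\<bar> \<le> s") (auto simp: abs_le_iff)
        qed
      qed
    qed
    then show ?thesis unfolding Dd_J using Mp by (simp add: divide_right_mono)
  qed
  have hi: "set_integrable lborel {a..b} (\<lambda>x. \<bar>f_pow g x - m\<bar>)"
    by (intro set_integrable_abs set_integral_diff(1) f_pow_set_integrable[OF g(1)]
        borel_integrable_atLeastAtMost' continuous_on_const)
  have h1: "((\<lambda>x. sg g * (f_pow g x - m) - 2 * sg g * (if x \<in> {-t..t} then f_pow g x - m else 0))
      has_integral (sg g * ((GG g b - GG g a) - m*(b-a)) - 2 * sg g * JJ g m a b t)) {a..b}"
    by (intro has_integral_diff has_integral_mult_right fm_has_integral g(1) cut less_imp_le[OF tp])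
      (use ab in simp)
  have e: "sg g * ((GG g b - GG g a) - m*(b-a)) - 2 * sg g * JJ g m a b t = - 2 * sg g * JJ g m a b t"
    using mM Lp by (simp add: M_def)
  have h2: "((\<lambda>x. \<bar>f_pow g x - m\<bar>) has_integral (- 2 * sg g * JJ g m a b t)) {a..b}"
  proof (rule has_integral_spike[OF negligible_sing[of 0] _ h1[unfolded e]])
    show "\<bar>f_pow g x - m\<bar> = sg g * (f_pow g x - m) - 2 * sg g * (if x \<in> {-t..t} then f_pow g x - m else 0)"
      if "x \<in> {a..b} - {0}" for x
    proof -
      have x: "x \<noteq> 0" using that by simp
      note P = pw[OF g(2) mp x, folded t_def]
      show ?thesis
      proof (cases "\<bar>x\<bar> \<le> t")
        case True
        then show ?thesis using P(1)[OF True] by (auto simp: abs_le_iff sg_def split: if_splits)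
      next
        case False
        then show ?thesis using P(2) by (auto simp: abs_le_iff sg_def split: if_splits)
      qed
    qed
  qed
  have osc: "osc_on (f_pow g) a b = (- 2 * sg g * JJ g m a b t) / (b - a)"
    unfolding osc_on_def m_def[symmetric] set_borel_integral_eq_integral(2)[OF hi]
    using h2 by (simp add: integral_unique)
  have "rel_osc (f_pow g) a b = ((- 2 * sg g * JJ g m a b t) / (b - a)) / (M/(b-a))"
    unfolding rel_osc_def osc m_def[symmetric] mM ..
  also have "\<dots> = - 2 * sg g * JJ g m a b t / M" using Lp by simp
  finally show "rel_osc (f_pow g) a b = 2 * Dd g a b t"
    unfolding Dd_J by simp
qed



lemma kappa_bound:
  fixes q u :: real
  assumes q: "q > 1" and u: "0 \<le> u"
  defines "c0 \<equiv> q powr (-1/(q-1))"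
  shows "u - u powr q \<le> c0 - c0 powr q" and "c0 powr (q-1) = 1/q" and "c0 > 0"
proof -
  have "q \<noteq> 0" using q by simp
  then show c0p: "c0 > 0" by (simp add: c0_def)
  have e: "-1/(q-1) * (q-1) = -1" using q by simp
  have "c0 powr (q-1) = q powr (-1/(q-1) * (q-1))" by (simp add: c0_def powr_powr)
  also have "\<dots> = q powr (-1)" by (simp only: e)
  also have "\<dots> = 1/q" using q by (simp add: powr_minus_divide)
  finally show cq: "c0 powr (q-1) = 1/q" .
  show "u - u powr q \<le> c0 - c0 powr q"
  proof (cases "u = 0")
    case True
    have "c0 powr q = c0 * c0 powr (q-1)" using c0p by (simp add: powr_diff)
    then have "c0 powr q = c0 / q" using cq by simp
    moreover have "c0 / q \<le> c0" using c0p q by (simp add: divide_le_eq)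
    ultimately show ?thesis using True by simp
  next
    case False
    then have up: "u > 0" using u by simp
    have d: "((\<lambda>x. x powr q) has_field_derivative q * c0 powr (q-1)) (at c0 within {0<..})"
      using has_real_derivative_powr[OF c0p] by (rule has_field_derivative_at_within)
    have "q * c0 powr (q-1) * (u - c0) \<le> u powr q - c0 powr q"
      by (rule convex_on_imp_above_tangent[OF powr_convex _ _ _ d]) (use q c0p up in \<open>auto simp: interior_open\<close>)
    then show ?thesis using cq q by simp
  qed
qed

lemma phi_mono:
  fixes q w1 w2 :: real
  assumes q: "q \<ge> 1" and w: "0 < w1" "w1 \<le> w2"
  shows "(1+w1) powr q - w1 powr q \<le> (1+w2) powr q - w2 powr q"
proof (rule DERIV_nonneg_imp_nondecreasing[where f="\<lambda>x. (1+x) powr q - x powr q", OF w(2)])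
  fix x assume x: "w1 \<le> x" "x \<le> w2"
  then have xp: "x > 0" using w by simp
  have "((\<lambda>x. (1+x) powr q - x powr q) has_real_derivative (q * (1+x) powr (q-1) * 1 - q * x powr (q-1))) (at x)"
    using xp by (intro derivative_eq_intros) auto
  moreover have "q * (1+x) powr (q-1) * 1 - q * x powr (q-1) \<ge> 0"
    using powr_mono2[of "q-1" x "1+x"] q xp by simp
  ultimately show "\<exists>y. ((\<lambda>x. (1+x) powr q - x powr q) has_real_derivative y) (at x) \<and> 0 \<le> y" by blast
qed

lemma h_ge:
  fixes q a b c :: real
  assumes q: "q \<ge> 1" and a: "0 \<le> a" "a < c" "c \<le> b"
  shows "((c-a)/(b-a)) powr q \<le> (c powr q - a powr q)/(b powr q - a powr q)"
proof (cases "a = 0")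
  case True
  have "0 \<le> c" "0 \<le> b" using a by auto
  then show ?thesis using True by (simp add: powr_divide)
next
  case False
  then have ap: "a > 0" using a by simp
  define w1 where "w1 = a/(c-a)"
  define w2 where "w2 = a/(b-a)"
  have w1p: "w1 > 0" using ap a by (simp add: w1_def)
  have w12: "w2 \<le> w1" unfolding w1_def w2_def using ap a by (simp add: frac_le)
  have w2p: "w2 > 0" using ap a by (simp add: w2_def)
  have ph: "(1+w2) powr q - w2 powr q \<le> (1+w1) powr q - w1 powr q"
    by (rule phi_mono[OF q w2p w12])
  have e1: "(1+w1) powr q - w1 powr q = (c powr q - a powr q) / (c-a) powr q"
  proof -
    have "1 + w1 = c/(c-a)" using a by (simp add: w1_def field_simps)
    then show ?thesis using a ap by (simp add: w1_def powr_divide diff_divide_distrib)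
  qed
  have e2: "(1+w2) powr q - w2 powr q = (b powr q - a powr q) / (b-a) powr q"
  proof -
    have "1 + w2 = b/(b-a)" using a by (simp add: w2_def field_simps)
    then show ?thesis using a ap by (simp add: w2_def powr_divide diff_divide_distrib)
  qed
  have bq: "b powr q - a powr q > 0" using a ap q by (simp add: powr_less_mono2)
  have cp: "(c-a) powr q > 0" "(b-a) powr q > 0" using a by auto
  from ph[unfolded e1 e2] have "(b powr q - a powr q) * (c-a) powr q \<le> (c powr q - a powr q) * (b-a) powr q"
    using cp by (simp add: divide_simps mult.commute)
  then show ?thesis using bq cp a by (simp add: powr_divide divide_simps mult.commute)
qed

lemma Rplus_bound:
  fixes q a b c :: real
  assumes q: "q > 1" and a: "0 \<le> a" "a \<le> c" "c \<le> b" "a < b"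
  shows "(c-a)/(b-a) - (c powr q - a powr q)/(b powr q - a powr q) \<le> q powr (-1/(q-1)) - (q powr (-1/(q-1))) powr q"
proof (cases "a = c")
  case True
  have "0 \<le> q powr (-1/(q-1)) - (q powr (-1/(q-1))) powr q"
    using kappa_bound(1)[OF q, of 0] by simp
  then show ?thesis using True by simp
next
  case False
  define u where "u = (c-a)/(b-a)"
  have u0: "0 \<le> u" using a by (simp add: u_def)
  have "u powr q \<le> (c powr q - a powr q)/(b powr q - a powr q)"
    unfolding u_def by (rule h_ge) (use q a False in auto)
  then have "(c-a)/(b-a) - (c powr q - a powr q)/(b powr q - a powr q) \<le> u - u powr q"
    by (simp add: u_def)
  also have "\<dots> \<le> q powr (-1/(q-1)) - (q powr (-1/(q-1))) powr q" by (rule kappa_bound(1)[OF q u0])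
  finally show ?thesis .
qed


lemma GG_nonneg_eq: "0 \<le> x \<Longrightarrow> GG g x = x powr (g+1)/(g+1)"
  by (simp add: GG_def)

lemma rel_Rplus_le:
  fixes al a b :: real
  assumes al: "al > 0" and a: "0 \<le> a" "a < b"
  shows "rel_osc (f_pow al) a b \<le> 2 * ((al+1) powr (-1/al) - ((al+1) powr (-1/al)) powr (al+1))"
proof -
  let ?q = "al + 1"
  let ?k = "(al+1) powr (-1/al) - ((al+1) powr (-1/al)) powr (al+1)"
  have q: "?q > 1" using al by simp
  have qq: "?q - 1 = al" by simp
  have kk: "?k = ?q powr (-1/(?q-1)) - (?q powr (-1/(?q-1))) powr ?q" by (simp only: qq)
  have g: "al > -1" "al \<noteq> 0" using al by auto
  define m where "m = mean_on (f_pow al) a b"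
  define t where "t = m powr (1/al)"
  note K = key[OF g a(2), folded m_def, folded t_def]
  have tp: "t > 0" using K(2) by (simp add: t_def)
  have sg1: "sg al = 1" using al by (simp add: sg_def)
  have "Dd al a b t \<le> ?k"
  proof (cases "t \<le> a")
    case True
    then have "cl t a = t" "cl t b = t" using a tp by (auto simp: cl_def)
    then have "Dd al a b t = 0" by (simp add: Dd_def)
    moreover have "0 \<le> ?k" using kappa_bound(1)[OF q, of 0] kk by simp
    ultimately show ?thesis by simp
  next
    case False
    define c where "c = min t b"
    have cla: "cl t a = a" "cl t b = c" using False a tp by (auto simp: cl_def c_def)
    have c: "a \<le> c" "c \<le> b" using False a by (auto simp: c_def)
    have qp: "?q > 0" using al by simp
    have e: "(GG al c - GG al a)/(GG al b - GG al a) = (c powr ?q - a powr ?q)/(b powr ?q - a powr ?q)"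
      using c a qp by (simp add: GG_nonneg_eq diff_divide_distrib[symmetric])
    have "Dd al a b t = (c-a)/(b-a) - (c powr ?q - a powr ?q)/(b powr ?q - a powr ?q)"
      unfolding Dd_def sg1 cla e by simp
    also have "\<dots> \<le> ?k" unfolding kk by (rule Rplus_bound[OF q a(1) c a(2)])
    finally show ?thesis .
  qed
  then show ?thesis using K(3) by simp
qed

lemma rel_01:
  fixes al :: real
  assumes al: "al > 0"
  shows "rel_osc (f_pow al) 0 1 = 2 * ((al+1) powr (-1/al) - ((al+1) powr (-1/al)) powr (al+1))"
proof -
  let ?q = "al + 1"
  define c0 where "c0 = (al+1) powr (-1/al)"
  have g: "al > -1" "al \<noteq> 0" using al by auto
  have c0p: "c0 > 0" using al by (simp add: c0_def)
  have "1 \<le> (al+1) powr (1/al)" using al by (intro ge_one_powr_ge_zero) auto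
  then have c01: "c0 \<le> 1" unfolding c0_def using al by (simp add: powr_minus_divide)
  define m where "m = mean_on (f_pow al) 0 1"
  define t where "t = m powr (1/al)"
  note K = key[OF g zero_less_one, folded m_def, folded t_def]
  have sg1: "sg al = 1" using al by (simp add: sg_def)
  have cl: "cl c0 0 = 0" "cl c0 1 = c0" using c0p c01 by (auto simp: cl_def)
  have "Dd al 0 1 c0 = c0 - c0 powr ?q"
    unfolding Dd_def sg1 cl using c0p al by (simp add: GG_nonneg_eq)
  then have "2 * (c0 - c0 powr ?q) \<le> rel_osc (f_pow al) 0 1"
    using K(3) K(4)[of c0] c0p by simp
  moreover have "rel_osc (f_pow al) 0 1 \<le> 2 * (c0 - c0 powr ?q)"
    using rel_Rplus_le[OF al order_refl zero_less_one] by (simp add: c0_def)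
  ultimately show ?thesis by (simp add: c0_def)
qed



lemma key_ex:
  assumes "g > -1" "g \<noteq> 0" "a < b"
  shows "\<exists>t\<ge>0. rel_osc (f_pow g) a b = 2 * Dd g a b t \<and> (\<forall>s\<ge>0. Dd g a b s \<le> Dd g a b t)"
proof -
  note K = key[OF assms]
  have "mean_on (f_pow g) a b powr (1/g) \<ge> 0" by simp
  then show ?thesis using K(3,4) by blast
qed

lemma rel_eq_by_Dd:
  assumes g1: "g1 > -1" "g1 \<noteq> 0" "a1 < b1" and g2: "g2 > -1" "g2 \<noteq> 0" "a2 < b2"
    and h12: "\<And>s. s \<ge> 0 \<Longrightarrow> \<exists>s'\<ge>0. Dd g2 a2 b2 s' = Dd g1 a1 b1 s"
    and h21: "\<And>s. s \<ge> 0 \<Longrightarrow> \<exists>s'\<ge>0. Dd g1 a1 b1 s' = Dd g2 a2 b2 s"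
  shows "rel_osc (f_pow g1) a1 b1 = rel_osc (f_pow g2) a2 b2"
proof -
  obtain t1 where t1: "t1 \<ge> 0" "rel_osc (f_pow g1) a1 b1 = 2 * Dd g1 a1 b1 t1" "\<forall>s\<ge>0. Dd g1 a1 b1 s \<le> Dd g1 a1 b1 t1"
    using key_ex[OF g1] by blast
  obtain t2 where t2: "t2 \<ge> 0" "rel_osc (f_pow g2) a2 b2 = 2 * Dd g2 a2 b2 t2" "\<forall>s\<ge>0. Dd g2 a2 b2 s \<le> Dd g2 a2 b2 t2"
    using key_ex[OF g2] by blast
  obtain s1 where "s1 \<ge> 0" "Dd g2 a2 b2 s1 = Dd g1 a1 b1 t1" using h12[OF t1(1)] by blast
  then have "Dd g1 a1 b1 t1 \<le> Dd g2 a2 b2 t2" using t2(3) by metis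
  moreover obtain s2 where "s2 \<ge> 0" "Dd g1 a1 b1 s2 = Dd g2 a2 b2 t2" using h21[OF t2(1)] by blast
  then have "Dd g2 a2 b2 t2 \<le> Dd g1 a1 b1 t1" using t1(3) by metis
  ultimately show ?thesis using t1(2) t2(2) by simp
qed

lemma GG_scale:
  assumes lam: "lam > 0" and g: "g > -1"
  shows "GG g (lam*x) = lam powr (g+1) * GG g x"
proof (cases "0 \<le> x")
  case True then show ?thesis using lam by (simp add: GG_def powr_mult)
next
  case False
  have "(- (lam*x)) powr (g+1) = (lam * (-x)) powr (g+1)" by simp
  also have "\<dots> = lam powr (g+1) * (-x) powr (g+1)" using lam False by (intro powr_mult)
  finally show ?thesis using lam False by (simp add: GG_def zero_le_mult_iff)
qed

lemma GG_neg: "GG g (-x) = - GG g x"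
  by (auto simp: GG_def)

lemma cl_scale: "lam > 0 \<Longrightarrow> cl (lam * s) (lam * x) = lam * cl s x"
  by (simp add: cl_def max_mult_distrib_left min_mult_distrib_left)

lemma cl_neg: "s \<ge> 0 \<Longrightarrow> cl s (-x) = - cl s x"
  by (auto simp: cl_def max_def min_def)

lemma Dd_scale:
  assumes lam: "lam > 0" and g: "g > -1"
  shows "Dd g (lam * a) (lam * b) (lam * s) = Dd g a b s"
proof -
  have lq: "lam powr (g+1) > 0" using lam by simp
  show ?thesis
    unfolding Dd_def cl_scale[OF lam] GG_scale[OF lam g]
    using lam lq by (simp add: right_diff_distrib[symmetric])
qed

lemma Dd_neg: "s \<ge> 0 \<Longrightarrow> Dd g (-b) (-a) s = Dd g a b s"
  unfolding Dd_def by (simp add: cl_neg GG_neg algebra_simps)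

lemma rel_scale:
  assumes lam: "lam > 0" and g: "g > -1" "g \<noteq> 0" and ab: "a < b"
  shows "rel_osc (f_pow g) (lam * a) (lam * b) = rel_osc (f_pow g) a b"
proof (rule rel_eq_by_Dd[OF g _ g ab])
  show "lam*a < lam*b" using lam ab by simp
  show "\<exists>s'\<ge>0. Dd g a b s' = Dd g (lam * a) (lam * b) s" if "s \<ge> 0" for s
    using Dd_scale[OF lam g(1), of a b "s / lam"] that lam by (intro exI[of _ "s / lam"]) auto
  show "\<exists>s'\<ge>0. Dd g (lam * a) (lam * b) s' = Dd g a b s" if "s \<ge> 0" for s
    using Dd_scale[OF lam g(1), of a b s] that lam by (intro exI[of _ "lam * s"]) auto
qed

lemma rel_neg:
  assumes g: "g > -1" "g \<noteq> 0" and ab: "a < b"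
  shows "rel_osc (f_pow g) (-b) (-a) = rel_osc (f_pow g) a b"
  by (rule rel_eq_by_Dd[OF g _ g ab]) (use ab Dd_neg in auto)



definition PH :: "real \<Rightarrow> real \<Rightarrow> real" where
  "PH q x = (if 0 \<le> x then x powr q else - ((-x) powr q))"

lemma GG_PH: "GG g x = PH (g+1) x / (g+1)"
  by (simp add: GG_def PH_def)

lemma PH_inv:
  assumes q: "q > 0" shows "PH (1/q) (PH q x) = x"
proof (cases "0 \<le> x")
  case True then show ?thesis using q by (simp add: PH_def powr_powr)
next
  case False
  then have "(-x) powr q > 0" by simp
  then show ?thesis using False q by (simp add: PH_def powr_powr)
qed

lemma PH_strict: assumes q: "q > 0" and xy: "x < y" shows "PH q x < PH q y"
proof -
  have "GG (q-1) x < GG (q-1) y" by (rule GG_strict_mono) (use q xy in auto)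
  then show ?thesis using q by (simp add: GG_PH divide_strict_right_mono_neg divide_less_cancel)
qed

lemma PH_le_iff: assumes q: "q > 0" shows "PH q x \<le> PH q y \<longleftrightarrow> x \<le> y"
  using PH_strict[OF q, of x y] PH_strict[OF q, of y x] by (cases x y rule: linorder_cases) auto

lemma PH_neg: "PH q (-x) = - PH q x"
  by (auto simp: PH_def)

lemma PH_nonneg: "0 \<le> x \<Longrightarrow> PH q x = x powr q"
  by (simp add: PH_def)

lemma cl_PH:
  assumes q: "q > 0" and s: "s \<ge> 0"
  shows "cl (PH q s) (PH q x) = PH q (cl s x)"
proof -
  have m1: "min (PH q s) (PH q x) = PH q (min s x)"
    using PH_le_iff[OF q] by (auto simp: min_def)
  have m2: "max (PH q (-s)) (PH q z) = PH q (max (-s) z)" for z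
    using PH_le_iff[OF q] by (auto simp: max_def)
  show ?thesis unfolding cl_def m1 m2[symmetric] PH_neg ..
qed

lemma dual_exp:
  fixes al :: real
  assumes al: "al > 0"
  shows "- al/(al+1) + 1 = 1/(al+1)"
proof -
  have "al + 1 \<noteq> 0" using al by simp
  then show ?thesis by (simp add: field_simps)
qed

lemma GG_dual:
  fixes al :: real
  assumes al: "al > 0"
  shows "GG (- al/(al+1)) (PH (al+1) y) = (al+1) * y"
  unfolding GG_PH dual_exp[OF al] using al PH_inv[of "al+1" y] by simp

lemma Dd_dual:
  fixes al :: real
  assumes al: "al > 0" and s: "s \<ge> 0"
  shows "Dd (- al/(al+1)) (PH (al+1) a) (PH (al+1) b) (PH (al+1) s) = Dd al a b s"
proof -
  let ?q = "al + 1"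
  have q: "?q > 0" using al by simp
  have "al/(al+1) > 0" using al by simp
  then have sgb: "sg (- al/(al+1)) = -1" by (simp add: sg_def)
  have sga: "sg al = 1" using al by (simp add: sg_def)
  have r1: "(?q*x - ?q*y)/(?q*z - ?q*w) = (x-y)/(z-w)" for x y z w
    using q by (simp add: right_diff_distrib[symmetric])
  have r2: "(X/?q - Y/?q)/(Z/?q - W/?q) = (X-Y)/(Z-W)" for X Y Z W
    using q by (simp add: diff_divide_distrib[symmetric])
  show ?thesis
    unfolding Dd_def sgb sga cl_PH[OF q s] GG_dual[OF al] r1
    unfolding GG_PH r2 by simp
qed

lemma rel_dual:
  fixes al :: real
  assumes al: "al > 0" and ab: "a < b"
  shows "rel_osc (f_pow (- al/(al+1))) (PH (al+1) a) (PH (al+1) b) = rel_osc (f_pow al) a b"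
proof (rule rel_eq_by_Dd)
  let ?q = "al + 1"
  have q: "?q > 0" using al by simp
  show "- al/(al+1) > -1" using al by (simp add: field_simps)
  show "- al/(al+1) \<noteq> 0" using al by simp
  show "PH ?q a < PH ?q b" by (rule PH_strict[OF q ab])
  show "al > -1" "al \<noteq> 0" "a < b" using al ab by auto
  show "\<exists>s'\<ge>0. Dd (- al/(al+1)) (PH ?q a) (PH ?q b) s' = Dd al a b s" if s: "s \<ge> 0" for s
    using Dd_dual[OF al s, of a b] PH_nonneg[OF s, of ?q] s by (intro exI[of _ "PH ?q s"]) auto
  show "\<exists>s'\<ge>0. Dd al a b s' = Dd (- al/(al+1)) (PH ?q a) (PH ?q b) s" if s: "s \<ge> 0" for s
  proof (intro exI conjI)
    let ?s' = "PH (1/?q) s"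
    show "?s' \<ge> 0" using s by (simp add: PH_nonneg)
    then show "Dd al a b ?s' = Dd (- al/(al+1)) (PH ?q a) (PH ?q b) s"
      using Dd_dual[OF al, of ?s' a b] PH_inv[of "1/?q" s] q by simp
  qed
qed



definition kk :: "real \<Rightarrow> real \<Rightarrow> real" where
  "kk al x = x powr al * (1 + al*(x+1))"

lemma kk_strict:
  fixes al :: real
  assumes al: "al > 0" and xy: "0 \<le> x" "x < y"
  shows "kk al x < kk al y"
proof -
  have 1: "x powr al < y powr al" using xy al by (simp add: powr_less_mono2)
  have 2: "1 + al*(x+1) < 1 + al*(y+1)" using xy al by simp
  have 3: "0 \<le> x powr al" "0 < 1 + al*(x+1)" using al xy by (auto intro!: add_pos_nonneg)
  have "x powr al * (1 + al*(x+1)) \<le> y powr al * (1 + al*(x+1))" using 1 3 by (simp add: mult_right_mono)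
  also have "\<dots> < y powr al * (1 + al*(y+1))" using 2 1 3 by (intro mult_strict_left_mono) auto
  finally show ?thesis by (simp add: kk_def)
qed

lemma kk_le_iff:
  fixes al :: real
  assumes al: "al > 0" and xy: "0 \<le> x" "0 \<le> y"
  shows "kk al x \<le> kk al y \<longleftrightarrow> x \<le> y"
  using kk_strict[OF al xy(1), of y] kk_strict[OF al xy(2), of x]
  by (cases x y rule: linorder_cases) auto

lemma kk_cont:
  fixes al :: real
  assumes al: "al > 0"
  shows "continuous_on {0..1} (kk al)"
proof -
  have "continuous_on {0..1} (\<lambda>x::real. x powr al)"
    by (rule continuous_on_powr'[OF continuous_on_id continuous_on_const]) (use al in auto)
  moreover have "continuous_on {0..1} (\<lambda>x::real. 1 + al*(x+1))" by (intro continuous_intros)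
  ultimately show ?thesis unfolding kk_def by (rule continuous_on_mult)
qed

lemma eta1_prop:
  fixes al :: real
  assumes al: "al > 0"
  shows "0 < eta1 al" "eta1 al < 1" "kk al (eta1 al) = 1"
    "\<And>x. 0 \<le> x \<Longrightarrow> x \<le> eta1 al \<longleftrightarrow> kk al x \<le> 1"
proof -
  have k0: "kk al 0 = 0" using al by (simp add: kk_def)
  have k1: "kk al 1 = 1 + 2*al" by (simp add: kk_def)
  obtain e where e: "0 \<le> e" "e \<le> 1" "kk al e = 1"
    using IVT'[of "kk al" 0 1 1, OF _ _ _ kk_cont[OF al]] k0 k1 al by auto
  have e0: "e \<noteq> 0" using e k0 by auto
  have e1: "e \<noteq> 1" using e k1 al by auto
  have P: "0 < x \<and> x < 1 \<and> x powr al = 1 / (1 + al * (x + 1)) \<longleftrightarrow> 0 < x \<and> x < 1 \<and> kk al x = 1" for x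
  proof -
    have "0 < x \<Longrightarrow> 1 + al * (x + 1) > 0" using al by (simp add: add_pos_pos)
    then show ?thesis by (auto simp: kk_def field_simps)
  qed
  have "eta1 al = e"
    unfolding eta1_def P
  proof (rule the_equality)
    show "0 < e \<and> e < 1 \<and> kk al e = 1" using e e0 e1 by auto
    fix x assume x: "0 < x \<and> x < 1 \<and> kk al x = 1"
    show "x = e" using kk_le_iff[OF al, of x e] kk_le_iff[OF al, of e x] x e by auto
  qed
  then show "0 < eta1 al" "eta1 al < 1" "kk al (eta1 al) = 1" using e e0 e1 by auto
  show "x \<le> eta1 al \<longleftrightarrow> kk al x \<le> 1" if "0 \<le> x" for x
    using kk_le_iff[OF al that, of e] e \<open>eta1 al = e\<close> by simp
qed



lemma algA0:
  fixes P Q R d F q :: real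
  assumes "Q\<noteq>0" "R\<noteq>0" "d\<noteq>0" "F\<noteq>0" "q \<noteq> 0" "q - 1 \<noteq> 0"
  shows "(P/(Q*R)+(d-1))/d - (P/(Q*R)*(F/(q*d))/q + (F-1)/q)/(1/q + (F-1)/q)
     = (q-1)/(Q*q) * (P/(R*d) + Q*q/(q-1)*(1/F - 1/d))"
proof -
  have "1/q + (F-1)/q = F/q" by (simp add: add_divide_distrib[symmetric])
  then show ?thesis using assms by (simp add: field_simps)
qed
lemma algB0:
  fixes P Q R d F q :: real
  assumes "Q\<noteq>0" "R\<noteq>0" "d\<noteq>0" "F\<noteq>0" "q \<noteq> 0" "q - 1 \<noteq> 0"
  shows "(P/(Q*R)+P/(Q*R))/d - (P/(Q*R)*(F/(q*d))/q + P/(Q*R)*(F/(q*d))/q)/(1/q + (F-1)/q)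
     = (q-1)/(Q*q) * (2 * P/(R*d))"
proof -
  have "1/q + (F-1)/q = F/q" by (simp add: add_divide_distrib[symmetric])
  then show ?thesis using assms by (simp add: field_simps)
qed

definition KK :: "real \<Rightarrow> real" where "KK al = al / (al+1) powr ((al+1)/al)"

definition psiA :: "real \<Rightarrow> real \<Rightarrow> real" where
  "psiA \<alpha> \<eta> = (1 + \<eta> powr (\<alpha> + 1)) powr (1 / \<alpha>) / (1 + \<eta>) powr ((\<alpha> + 1) / \<alpha>)
       + (\<alpha> + 1) powr ((\<alpha> + 1) / \<alpha>) / \<alpha>
         * (1 / (1 + \<eta> powr (\<alpha> + 1)) - 1 / (1 + \<eta>))"

definition psiB :: "real \<Rightarrow> real \<Rightarrow> real" where
  "psiB \<alpha> \<eta> = 2 * (1 + \<eta> powr (\<alpha> + 1)) powr (1 / \<alpha>) / (1 + \<eta>) powr ((\<alpha> + 1) / \<alpha>)"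

lemma psi_AB: "psi \<alpha> \<eta> = (if \<eta> \<le> eta1 \<alpha> then psiA \<alpha> \<eta> else psiB \<alpha> \<eta>)"
  unfolding psi_def psiA_def psiB_def ..

lemma rel_psi_cases:
  fixes al e :: real
  assumes al: "al > 0" and e: "0 \<le> e" "e \<le> 1"
  defines "t \<equiv> mean_on (f_pow al) (-e) 1 powr (1/al)"
  shows "e \<le> t \<Longrightarrow> rel_osc (f_pow al) (-e) 1 = 2 * KK al * psiA al e"
    and "t \<le> e \<Longrightarrow> rel_osc (f_pow al) (-e) 1 = 2 * KK al * psiB al e"
    and "e \<le> t \<longleftrightarrow> kk al e \<le> 1"
    and "t \<le> e \<longleftrightarrow> 1 \<le> kk al e"
proof -
  let ?q = "al + 1"
  define E where "E = e powr ?q"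
  have g: "al > -1" "al \<noteq> 0" using al by auto
  have ab: "-e < 1" using e by simp
  define m where "m = mean_on (f_pow al) (-e) 1"
  note K = key[OF g ab, folded m_def, folded t_def]
  have q: "?q > 0" "?q \<noteq> 0" using al by auto
  have E0: "0 \<le> E" by (simp add: E_def)
  have Ee: "E \<le> e"
  proof (cases "e = 0")
    case True then show ?thesis by (simp add: E_def)
  next
    case False
    then have "e powr ?q \<le> e powr 1" using e al by (intro powr_mono') auto
    then show ?thesis using False e by (simp add: E_def)
  qed
  have GGm: "GG al (-e) = - E/?q" using e by (simp add: GG_neg GG_nonneg_eq E_def)
  have GG1: "GG al 1 = 1/?q" by (simp add: GG_nonneg_eq)
  have m0: "m = (1/?q + E/?q)/(1+e)" using K(1) unfolding GGm GG1 by simp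
  have e1p: "1 + e > 0" using e by simp
  have mE: "m = (1 + E)/(?q*(1+e))" unfolding m0 by (simp only: add_divide_distrib[symmetric] divide_divide_eq_left)
  have mp: "m > 0" using K(2) .
  have "0 \<le> al*(1+e)" using al e by simp
  then have num: "1 + E \<le> ?q*(1+e)" using Ee by (simp add: algebra_simps)
  have m1: "m \<le> 1" unfolding mE using num q e1p by simp
  have tp: "t > 0" using mp by (simp add: t_def m_def[symmetric])
  have t1: "t \<le> 1" unfolding t_def m_def[symmetric] using mp m1 al by (simp add: powr_le1)
  have tal: "t powr al = m" using mp al by (simp add: t_def m_def[symmetric] powr_powr)
  have tq: "t powr ?q = t * m" using tp tal by (simp add: powr_add)
  have GGt: "GG al t = t*m/?q" using tp by (simp add: GG_nonneg_eq tq)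
  define P where "P = (1+E) powr (1/al)"
  define Q where "Q = ?q powr (1/al)"
  define R where "R = (1+e) powr (1/al)"
  have PQR: "P > 0" "Q > 0" "R > 0" using E0 e al by (auto simp: P_def Q_def R_def)
  have tPQR: "t = P/(Q*R)" unfolding t_def m_def[symmetric] mE P_def Q_def R_def using E0 e q
    by (simp add: powr_divide powr_mult)
  have ex: "(al+1)/al = 1/al + 1" using al by (simp add: field_simps)
  have Rq: "(1+e) powr ((al+1)/al) = R*(1+e)" unfolding ex R_def using e by (simp add: powr_add)
  have Qq: "?q powr ((al+1)/al) = Q*?q" unfolding ex Q_def using q by (simp add: powr_add)
  have KKe: "KK al = al/(Q*?q)" unfolding KK_def Qq ..
  have sg1: "sg al = 1" using al by (simp add: sg_def)
  have cl1: "cl t 1 = t" using t1 tp by (simp add: cl_def)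
  show "e \<le> t \<longleftrightarrow> kk al e \<le> 1"
  proof -
    have "e \<le> t \<longleftrightarrow> e powr al \<le> t powr al"
    proof
      assume "e \<le> t" then show "e powr al \<le> t powr al" using al e by (intro powr_mono2) auto
    next
      assume h: "e powr al \<le> t powr al"
      show "e \<le> t"
      proof (rule ccontr)
        assume "\<not> e \<le> t"
        then have "t powr al < e powr al" using powr_less_mono2[of al t e] al tp by simp
        with h show False by simp
      qed
    qed
    also have "\<dots> \<longleftrightarrow> e powr al * (?q*(1+e)) \<le> 1 + E" unfolding tal mE using q e
      by (simp add: pos_le_divide_eq)
    also have "E = e * e powr al" unfolding E_def using e
      by (cases "e = 0") (auto simp: powr_add)
    also have "e powr al * (?q*(1+e)) \<le> 1 + e * e powr al \<longleftrightarrow> kk al e \<le> 1"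
      unfolding kk_def by (simp add: algebra_simps)
    finally show ?thesis .
  qed
  show "t \<le> e \<longleftrightarrow> 1 \<le> kk al e"
  proof -
    have "t \<le> e \<longleftrightarrow> t powr al \<le> e powr al"
    proof
      assume "t \<le> e" then show "t powr al \<le> e powr al" using al tp by (intro powr_mono2) auto
    next
      assume h: "t powr al \<le> e powr al"
      show "t \<le> e"
      proof (rule ccontr)
        assume "\<not> t \<le> e"
        then have "e powr al < t powr al" using powr_less_mono2[of al e t] al e by simp
        with h show False by simp
      qed
    qed
    also have "\<dots> \<longleftrightarrow> 1 + E \<le> e powr al * (?q*(1+e))" unfolding tal mE using q e
      by (simp add: pos_divide_le_eq)
    also have "E = e * e powr al" unfolding E_def using e
      by (cases "e = 0") (auto simp: powr_add)
    also have "1 + e * e powr al \<le> e powr al * (?q*(1+e)) \<longleftrightarrow> 1 \<le> kk al e"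
      unfolding kk_def by (simp add: algebra_simps)
    finally show ?thesis .
  qed
  show "rel_osc (f_pow al) (-e) 1 = 2 * KK al * psiA al e" if et: "e \<le> t"
  proof -
    have cla: "cl t (-e) = -e" using et e tp by (simp add: cl_def)
    have "Dd al (-e) 1 t = (t+e)/(1+e) - (t*m/?q + E/?q)/(1/?q + E/?q)"
      unfolding Dd_def sg1 cla cl1 GGt GGm GG1 by simp
    also have "\<dots> = KK al * psiA al e"
      unfolding psiA_def KKe Rq Qq E_def[symmetric] P_def[symmetric] mE tPQR
      using algA0[of Q R "1+e" "1+E" "al+1" P] PQR q e E0 al
      by (simp only: add_diff_cancel_left' add_diff_cancel_right') auto
    finally show ?thesis using K(3) by (simp add: m_def t_def)
  qed
  show "rel_osc (f_pow al) (-e) 1 = 2 * KK al * psiB al e" if et: "t \<le> e"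
  proof -
    have cla: "cl t (-e) = -t" using et e tp by (simp add: cl_def)
    have "Dd al (-e) 1 t = (t+t)/(1+e) - (t*m/?q + t*m/?q)/(1/?q + E/?q)"
      using GGm unfolding Dd_def sg1 cla cl1 GG_neg GGt GG1 by (simp add: GG_neg)
    also have "\<dots> = KK al * psiB al e"
      unfolding psiB_def KKe Rq Qq E_def[symmetric] P_def[symmetric] mE tPQR
      using algB0[of Q R "1+e" "1+E" "al+1" P] PQR q e E0 al
      by (simp only: add_diff_cancel_left' add_diff_cancel_right') (auto simp: mult.assoc)
    finally show ?thesis using K(3) by (simp add: m_def t_def)
  qed
qed



lemma KK_pos: "al > 0 \<Longrightarrow> KK al > 0"
  by (simp add: KK_def)

lemma rel_psi:
  fixes al e :: real
  assumes al: "al > 0" and e: "0 \<le> e" "e \<le> 1"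
  shows "rel_osc (f_pow al) (-e) 1 = 2 * KK al * psi al e"
proof (cases "e \<le> eta1 al")
  case True
  then have "kk al e \<le> 1" using eta1_prop(4)[OF al e(1)] by simp
  then show ?thesis using rel_psi_cases(1,3)[OF al e] True by (simp add: psi_AB)
next
  case False
  then have "1 \<le> kk al e" using eta1_prop(4)[OF al e(1)] by simp
  then show ?thesis using rel_psi_cases(2,4)[OF al e] False by (simp add: psi_AB)
qed

lemma psiAB_eq:
  fixes al :: real
  assumes al: "al > 0"
  shows "psiA al (eta1 al) = psiB al (eta1 al)"
proof -
  let ?e = "eta1 al"
  have e: "0 \<le> ?e" "?e \<le> 1" using eta1_prop(1,2)[OF al] by auto
  have k: "kk al ?e = 1" using eta1_prop(3)[OF al] .
  have "2 * KK al * psiA al ?e = 2 * KK al * psiB al ?e"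
    using rel_psi_cases(1,2,3,4)[OF al e] k by (metis order_refl)
  then show ?thesis using KK_pos[OF al] by auto
qed

lemma cont_base:
  fixes al :: real
  assumes al: "al > 0"
  shows "continuous_on {0..1} (\<lambda>x::real. 1 + x powr (al+1))"
    and "continuous_on {0..1} (\<lambda>x::real. (1 + x powr (al+1)) powr (1/al))"
    and "continuous_on {0..1} (\<lambda>x::real. (1 + x) powr ((al+1)/al))"
proof -
  have c: "continuous_on {0..1} (\<lambda>x::real. x powr (al+1))"
    by (rule continuous_on_powr'[OF continuous_on_id continuous_on_const]) (use al in auto)
  show c1: "continuous_on {0..1} (\<lambda>x::real. 1 + x powr (al+1))"
    by (rule continuous_on_add[OF continuous_on_const c])
  show "continuous_on {0..1} (\<lambda>x::real. (1 + x powr (al+1)) powr (1/al))"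
    by (rule continuous_on_powr'[OF c1 continuous_on_const]) (use al in auto)
  show "continuous_on {0..1} (\<lambda>x::real. (1 + x) powr ((al+1)/al))"
    by (rule continuous_on_powr'[OF continuous_on_add[OF continuous_on_const continuous_on_id] continuous_on_const]) auto
qed

lemma psiA_cont:
  fixes al :: real
  assumes al: "al > 0"
  shows "continuous_on {0..1} (psiA al)"
proof -
  note C = cont_base[OF al]
  have pos1: "\<forall>x::real \<in> {0..1}. 1 + x powr (al+1) \<noteq> 0"
    by (metis add_pos_nonneg order_less_irrefl powr_ge_zero zero_less_one)
  have pos2: "\<forall>x::real \<in> {0..1}. (1 + x) powr ((al+1)/al) \<noteq> 0" by auto
  have pos3: "\<forall>x::real \<in> {0..1}. 1 + x \<noteq> 0" by auto
  have a: "continuous_on {0..1} (\<lambda>x. (1 + x powr (al + 1)) powr (1 / al) / (1 + x) powr ((al + 1) / al))"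
    by (rule continuous_on_divide[OF C(2) C(3) pos2])
  have b: "continuous_on {0..1} (\<lambda>x::real. 1 / (1 + x powr (al + 1)) - 1 / (1 + x))"
    by (intro continuous_on_diff continuous_on_divide continuous_on_const C(1)
        continuous_on_add continuous_on_id pos1 pos3)
  show ?thesis unfolding psiA_def
    by (intro continuous_on_add a continuous_on_mult continuous_on_const b)
qed

lemma psiB_cont:
  fixes al :: real
  assumes al: "al > 0"
  shows "continuous_on {0..1} (psiB al)"
proof -
  note C = cont_base[OF al]
  have pos2: "\<forall>x::real \<in> {0..1}. (1 + x) powr ((al+1)/al) \<noteq> 0" by auto
  show ?thesis unfolding psiB_def
    by (rule continuous_on_divide[OF continuous_on_mult[OF continuous_on_const C(2)] C(3) pos2])
qed

lemma psi_cont: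
  fixes al :: real
  assumes al: "al > 0"
  shows "continuous_on {0..1} (psi al)"
proof -
  have "continuous_on {0..1} (\<lambda>x. if x \<le> eta1 al then psiA al x else psiB al x)"
  proof (rule continuous_on_cases_le[where h="\<lambda>x. x"])
    show "continuous_on {x \<in> {0..1}. x \<le> eta1 al} (psiA al)"
      by (rule continuous_on_subset[OF psiA_cont[OF al]]) auto
    show "continuous_on {x \<in> {0..1}. eta1 al \<le> x} (psiB al)"
      by (rule continuous_on_subset[OF psiB_cont[OF al]]) auto
    show "continuous_on {0..1} (\<lambda>x::real. x)" by (rule continuous_on_id)
    show "\<And>x. x \<in> {0..1} \<Longrightarrow> x = eta1 al \<Longrightarrow> psiA al x = psiB al x"
      using psiAB_eq[OF al] by simp
  qed
  moreover have "(\<lambda>x. if x \<le> eta1 al then psiA al x else psiB al x) = psi al"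
    by (rule ext) (simp add: psi_AB)
  ultimately show ?thesis by metis
qed

lemma psi_max:
  fixes al :: real
  assumes al: "al > 0"
  shows "\<exists>e\<in>{0..1}. \<forall>z\<in>{0..1}. psi al z \<le> psi al e"
  using continuous_attains_sup[OF compact_Icc _ psi_cont[OF al]] by auto

lemma psi0: "al > 0 \<Longrightarrow> psi al 0 = 1"
  using eta1_prop(1)[of al] by (simp add: psi_AB psiA_def)

lemma KK_c0:
  fixes al :: real
  assumes al: "al > 0"
  shows "(al+1) powr (-1/al) - ((al+1) powr (-1/al)) powr (al+1) = KK al"
proof -
  let ?q = "al+1"
  define c0 where "c0 = ?q powr (-1/al)"
  have q: "?q > 1" using al by simp
  have cb: "c0 powr (?q - 1) = 1/?q" "c0 > 0" using kappa_bound(2,3)[OF q, of 0] by (simp_all add: c0_def)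
  have c0q: "c0 powr ?q = c0 * c0 powr al" using cb by (simp add: powr_add)
  have s1: "c0 - c0 powr ?q = c0 * al / ?q" using cb c0q q by (simp add: field_simps)
  have c0e: "c0 = 1 / ?q powr (1/al)" using q by (simp add: c0_def powr_minus_divide)
  have Qq: "?q powr ((al+1)/al) = ?q powr (1/al) * ?q"
  proof -
    have "(al+1)/al = 1/al + 1" using al by (simp add: field_simps)
    then show ?thesis using q by (simp add: powr_add)
  qed
  have s2: "c0 * al / ?q = KK al" unfolding c0e KK_def Qq by simp
  show ?thesis unfolding c0_def[symmetric] s1 s2 ..
qed



lemma rel_plus_bound:
  fixes al a b :: real
  assumes al: "al > 0" and a: "0 \<le> a" "a < b"
  shows "rel_osc (f_pow al) a b \<le> 2 * KK al"
  using rel_Rplus_le[OF al a] KK_c0[OF al] by simp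

lemma rel_01_KK:
  fixes al :: real
  assumes al: "al > 0"
  shows "rel_osc (f_pow al) 0 1 = 2 * KK al"
  using rel_01[OF al] KK_c0[OF al] by simp

lemma bound_R:
  fixes al a b e :: real
  assumes al: "al > 0" and emax: "\<forall>z\<in>{0..1}. psi al z \<le> psi al e" and ab: "a < b"
  shows "rel_osc (f_pow al) a b \<le> 2 * KK al * psi al e"
proof -
  have g: "al > -1" "al \<noteq> 0" using al by auto
  have KKp: "KK al > 0" by (rule KK_pos[OF al])
  have p1: "1 \<le> psi al e" using emax psi0[OF al] by force
  have P: "rel_osc (f_pow al) a' b' \<le> 2 * KK al * psi al e" if "0 \<le> a'" "a' < b'" for a' b'
  proof -
    have "rel_osc (f_pow al) a' b' \<le> 2 * KK al" by (rule rel_plus_bound[OF al that])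
    also have "\<dots> \<le> 2 * KK al * psi al e" using KKp p1 by simp
    finally show ?thesis .
  qed
  have N: "rel_osc (f_pow al) (-e') 1 \<le> 2 * KK al * psi al e" if "0 \<le> e'" "e' \<le> 1" for e'
  proof -
    have "psi al e' \<le> psi al e" using emax that by auto
    then show ?thesis using rel_psi[OF al that] KKp by simp
  qed
  show ?thesis
  proof (cases "0 \<le> a")
    case True then show ?thesis using P ab by simp
  next
    case a0: False
    show ?thesis
    proof (cases "b \<le> 0")
      case True
      have "rel_osc (f_pow al) a b = rel_osc (f_pow al) (-b) (-a)" using rel_neg[OF g ab] by simp
      also have "\<dots> \<le> 2 * KK al * psi al e" using P True ab by simp
      finally show ?thesis .
    next
      case b0: False
      show ?thesis
      proof (cases "-a \<le> b")
        case True
        have bp: "b > 0" using b0 by simp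
        have "rel_osc (f_pow al) (b * (a/b)) (b * 1) = rel_osc (f_pow al) (a/b) 1"
          by (rule rel_scale[OF bp g]) (use ab bp in \<open>simp add: divide_less_eq\<close>)
        then have "rel_osc (f_pow al) a b = rel_osc (f_pow al) (- (-a/b)) 1" using bp by simp
        also have "\<dots> \<le> 2 * KK al * psi al e"
        proof (rule N)
          show "0 \<le> -a/b" using a0 bp by (simp add: divide_nonpos_pos)
          show "-a/b \<le> 1" using True bp by (simp add: le_divide_eq)
        qed
        finally show ?thesis .
      next
        case False
        have ap: "-a > 0" using a0 by simp
        have "rel_osc (f_pow al) a b = rel_osc (f_pow al) (-b) (-a)" using rel_neg[OF g ab] by simp
        also have "rel_osc (f_pow al) (-b) (-a) = rel_osc (f_pow al) ((-a) * (-b/(-a))) ((-a) * 1)" using ap by simp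
        also have "\<dots> = rel_osc (f_pow al) (-b/(-a)) 1"
          by (rule rel_scale[OF ap g]) (use ab ap in \<open>simp add: divide_less_eq\<close>)
        also have "\<dots> = rel_osc (f_pow al) (- (b/(-a))) 1" by simp
        also have "\<dots> \<le> 2 * KK al * psi al e"
        proof (rule N)
          show "0 \<le> b/(-a)" using b0 ap divide_pos_neg[of b a] by simp
          show "b/(-a) \<le> 1" using False ap by (simp add: le_divide_eq)
        qed
        finally show ?thesis .
      qed
    qed
  qed
qed

lemma set_dual:
  fixes al :: real and R :: "real set"
  assumes al: "al > 0"
    and hR: "\<And>a b. a < b \<Longrightarrow> {a..b} \<subseteq> R \<longleftrightarrow> {PH (al+1) a..PH (al+1) b} \<subseteq> R"
  shows "GR_norm (f_pow (- al/(al+1))) R = GR_norm (f_pow al) R"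
  unfolding GR_norm_def
proof -
  let ?q = "al + 1"
  have q: "?q > 0" "1/?q > 0" using al by auto
  have inv: "PH ?q (PH (1/?q) c) = c" for c
    using PH_inv[OF q(2), of c] by simp
  have "{rel_osc (f_pow (- al/(al+1))) a b |a b. a < b \<and> {a..b} \<subseteq> R}
       = {rel_osc (f_pow al) a b |a b. a < b \<and> {a..b} \<subseteq> R}"
  proof (intro equalityI subsetI)
    fix x assume "x \<in> {rel_osc (f_pow (- al/(al+1))) a b |a b. a < b \<and> {a..b} \<subseteq> R}"
    then obtain c d where cd: "x = rel_osc (f_pow (- al/(al+1))) c d" "c < d" "{c..d} \<subseteq> R" by blast
    define a where "a = PH (1/?q) c"
    define b where "b = PH (1/?q) d"
    have ab: "a < b" unfolding a_def b_def by (rule PH_strict[OF q(2) cd(2)])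
    have e: "PH ?q a = c" "PH ?q b = d" by (simp_all add: a_def b_def inv)
    have "{a..b} \<subseteq> R" using hR[OF ab] cd(3) e by simp
    moreover have "x = rel_osc (f_pow al) a b" using cd(1) rel_dual[OF al ab] e by simp
    ultimately show "x \<in> {rel_osc (f_pow al) a b |a b. a < b \<and> {a..b} \<subseteq> R}" using ab by blast
  next
    fix x assume "x \<in> {rel_osc (f_pow al) a b |a b. a < b \<and> {a..b} \<subseteq> R}"
    then obtain a b where ab: "x = rel_osc (f_pow al) a b" "a < b" "{a..b} \<subseteq> R" by blast
    have "PH ?q a < PH ?q b" by (rule PH_strict[OF q(1) ab(2)])
    moreover have "{PH ?q a..PH ?q b} \<subseteq> R" using hR[OF ab(2)] ab(3) by simp
    moreover have "x = rel_osc (f_pow (- al/(al+1))) (PH ?q a) (PH ?q b)" using ab(1) rel_dual[OF al ab(2)] by simp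
    ultimately show "x \<in> {rel_osc (f_pow (- al/(al+1))) a b |a b. a < b \<and> {a..b} \<subseteq> R}" by blast
  qed
  then show "Sup {rel_osc (f_pow (- al/(al+1))) a b |a b. a < b \<and> {a..b} \<subseteq> R}
       = Sup {rel_osc (f_pow al) a b |a b. a < b \<and> {a..b} \<subseteq> R}" by simp
qed

lemma PH0: "PH q 0 = 0" by (simp add: PH_def)

theorem corollary2p3:
  fixes p :: real
  assumes "p > 1"
  shows "GR_norm (f_pow (1 / (p - 1))) UNIV = GR_norm (f_pow (- 1 / p)) UNIV
    \<and> (\<exists>\<eta>\<in>{0..1}. \<forall>\<zeta>\<in>{0..1}. psi (1 / (p - 1)) \<zeta> \<le> psi (1 / (p - 1)) \<eta>)
    \<and> GR_norm (f_pow (1 / (p - 1))) UNIV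
        = GR_norm (f_pow (1 / (p - 1))) {0..} * (SUP \<eta>\<in>{0..1}. psi (1 / (p - 1)) \<eta>)
    \<and> GR_norm (f_pow (1 / (p - 1))) {0..} = GR_norm (f_pow (- 1 / p)) {0..}
    \<and> GR_norm (f_pow (- 1 / p)) {0..} = 2 * (p - 1) powr (p - 1) / p powr p"
proof -
  define al where "al = 1 / (p - 1)"
  have p1: "p - 1 > 0" using assms by simp
  have al: "al > 0" using p1 by (simp add: al_def)
  have alq: "al + 1 = p / (p-1)" using p1 by (simp add: al_def field_simps)
  have be: "- 1 / p = - al/(al+1)" unfolding alq using p1 assms by (simp add: al_def field_simps)
  have qa: "(al+1)/al = p" unfolding alq using p1 by (simp add: al_def field_simps)
  have hU: "\<And>a b. a < b \<Longrightarrow> {a..b} \<subseteq> (UNIV::real set) \<longleftrightarrow> {PH (al+1) a..PH (al+1) b} \<subseteq> UNIV" by simp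
  have hP: "{a..b} \<subseteq> {0::real..} \<longleftrightarrow> {PH (al+1) a..PH (al+1) b} \<subseteq> {0..}" if ab: "a < b" for a b
  proof -
    have qp: "al + 1 > 0" using al by simp
    have "PH (al+1) a < PH (al+1) b" by (rule PH_strict[OF qp ab])
    then have "{PH (al+1) a..PH (al+1) b} \<subseteq> {0..} \<longleftrightarrow> 0 \<le> PH (al+1) a" by auto
    also have "\<dots> \<longleftrightarrow> 0 \<le> a" using PH_le_iff[OF qp, of 0 a] by (simp add: PH0)
    also have "\<dots> \<longleftrightarrow> {a..b} \<subseteq> {0..}" using ab by auto
    finally show ?thesis by simp
  qed
  note SU = set_dual[OF al hU]
  note SP = set_dual[OF al hP]
  have GRU': "GR_norm (f_pow (-1/p)) UNIV = GR_norm (f_pow al) UNIV" unfolding be by (rule SU)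
  have GRU: "GR_norm (f_pow al) UNIV = GR_norm (f_pow (-1/p)) UNIV" using GRU' by simp
  have GRP': "GR_norm (f_pow (-1/p)) {0..} = GR_norm (f_pow al) {0..}" unfolding be by (rule SP)
  have GRP: "GR_norm (f_pow al) {0..} = GR_norm (f_pow (-1/p)) {0..}" using GRP' by simp
  have GRPv: "GR_norm (f_pow al) {0..} = 2 * KK al"
    unfolding GR_norm_def
  proof (rule cSup_eq_maximum)
    show "2 * KK al \<in> {rel_osc (f_pow al) a b |a b. a < b \<and> {a..b} \<subseteq> {0..}}"
    proof -
      have "2 * KK al = rel_osc (f_pow al) 0 1 \<and> (0::real) < 1 \<and> {0::real..1} \<subseteq> {0..}"
        using rel_01_KK[OF al] by auto
      then show ?thesis by blast
    qed
    show "x \<le> 2 * KK al" if xin: "x \<in> {rel_osc (f_pow al) a b |a b. a < b \<and> {a..b} \<subseteq> {0..}}" for x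
    proof -
      obtain a b where ab: "x = rel_osc (f_pow al) a b" "a < b" "{a..b} \<subseteq> {0..}" using xin by blast
      have "0 \<le> a" using ab(2,3) by auto
      then show ?thesis using rel_plus_bound[OF al _ ab(2)] ab(1) by simp
    qed
  qed
  obtain e where e: "e \<in> {0..1}" "\<forall>z\<in>{0..1}. psi al z \<le> psi al e" using psi_max[OF al] by blast
  have GRUv: "GR_norm (f_pow al) UNIV = 2 * KK al * psi al e"
    unfolding GR_norm_def
  proof (rule cSup_eq_maximum)
    have "rel_osc (f_pow al) (-e) 1 = 2 * KK al * psi al e" using rel_psi[OF al] e(1) by simp
    moreover have "-e < 1" using e(1) by simp
    ultimately have "2 * KK al * psi al e = rel_osc (f_pow al) (-e) 1 \<and> -e < 1 \<and> {-e..1} \<subseteq> UNIV" by simp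
    then show "2 * KK al * psi al e \<in> {rel_osc (f_pow al) a b |a b. a < b \<and> {a..b} \<subseteq> UNIV}"
      by blast
    show "x \<le> 2 * KK al * psi al e" if xin: "x \<in> {rel_osc (f_pow al) a b |a b. a < b \<and> {a..b} \<subseteq> UNIV}" for x
    proof -
      obtain a b where ab: "x = rel_osc (f_pow al) a b" "a < b" using xin by blast
      show ?thesis using bound_R[OF al e(2) ab(2)] ab(1) by simp
    qed
  qed
  have SUP: "(SUP \<eta>\<in>{0..1}. psi al \<eta>) = psi al e"
    by (rule cSup_eq_maximum) (use e in auto)
  have KKv: "2 * KK al = 2 * (p - 1) powr (p - 1) / p powr p"
  proof -
    have "KK al = al / (al+1) powr p" unfolding KK_def qa ..
    also have "\<dots> = al / (p/(p-1)) powr p" by (simp only: alq)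
    also have "\<dots> = (1/(p-1)) * (p-1) powr p / p powr p" using p1 assms
      by (simp add: al_def powr_divide)
    also have "(p-1) powr p = (p-1) powr (p-1) * (p-1)"
    proof -
      have "(p-1) powr p = (p-1) powr ((p-1) + 1)" by simp
      also have "\<dots> = (p-1) powr (p-1) * (p-1) powr 1" by (rule powr_add)
      finally show ?thesis using p1 by simp
    qed
    finally show ?thesis using p1 by simp
  qed
  have c1: "GR_norm (f_pow al) UNIV = GR_norm (f_pow (-1/p)) UNIV" by (rule GRU)
  have c2: "\<exists>\<eta>\<in>{0..1}. \<forall>\<zeta>\<in>{0..1}. psi al \<zeta> \<le> psi al \<eta>" using e by blast
  have c3: "GR_norm (f_pow al) UNIV = GR_norm (f_pow al) {0..} * (SUP \<eta>\<in>{0..1}. psi al \<eta>)"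
    unfolding GRUv GRPv SUP ..
  have c5: "GR_norm (f_pow (- 1 / p)) {0..} = 2 * (p - 1) powr (p - 1) / p powr p"
    using GRP GRPv KKv by simp
  show ?thesis
    unfolding al_def[symmetric] using c1 c2 c3 GRP c5 by (intro conjI)
qed


end
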